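(* Fix $\varepsilon>0$ and $\gamma\in(0,1)$, and let $d_N=(1-\gamma)\sqrt{\frac{\log N}{2\log\log N}}$. Let $n\in\mathbb{N}$, $G=\mathbb{Z}_2^n$ and $N=2^n=|G|$, and let $d$ be an integer with $2\leqslant d\leqslant d_N$. If $\Gamma\in\mathcal{G}(G,p)$ with $p\leqslant\sqrt[d]{d!(1-\varepsilon)\frac{\log N}{N^{d-1}}}$, then with high probability the diameter of $\Gamma$ is greater than $d$; that is, $\Pr(\operatorname{diam}(\Gamma)\leqslant d)\to0$ as $n\to\infty$, uniformly over all such $d$ and $p$.
   Context: For a group $G$ and a subset $S\subseteq G$, the (undirected) Cayley graph $\Gamma(G;S)$ has vertex set $G$ and an edge between $g\neq h$ iff $g^{-1}h\in S$ or $h^{-1}g\in S$ (loops and multiple edges ignored). The model $\mathcal{G}(G,p)$ is the probability space of Cayley graphs $\Gamma(G;S)$ where each element of $G$ is put in $S$ independently with probability $p$. The diameter of a disconnected graph is infinite. *)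

theory Defs
  imports Complex_Main "HOL-Algebra.Group"
begin

text \<open>The group Z_2^n, realised as the subsets of {0..<n} under symmetric difference
  (a subset corresponds to its indicator vector in Z_2^n).\<close>
definition Z2n :: "nat \<Rightarrow> nat set monoid" where
  "Z2n n = \<lparr>carrier = Pow {..<n}, mult = (\<lambda>A B. (A - B) \<union> (B - A)), one = {}\<rparr>"

definition cayley_edges :: "('a, 'b) monoid_scheme \<Rightarrow> 'a set \<Rightarrow> ('a \<times> 'a) set" where
  "cayley_edges G S = {(g, h). g \<in> carrier G \<and> h \<in> carrier G \<and> g \<noteq> h \<and>
      (inv\<^bsub>G\<^esub> g \<otimes>\<^bsub>G\<^esub> h \<in> S \<or> inv\<^bsub>G\<^esub> h \<otimes>\<^bsub>G\<^esub> g \<in> S)}"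

text \<open>diam(Gamma(G;S)) \<le> d: every two vertices are joined by a walk of length at most d
  (a disconnected graph has infinite diameter, so this fails then).\<close>
definition cayley_diam_le :: "('a, 'b) monoid_scheme \<Rightarrow> 'a set \<Rightarrow> nat \<Rightarrow> bool" where
  "cayley_diam_le G S d \<longleftrightarrow>
     (\<forall>g\<in>carrier G. \<forall>h\<in>carrier G. \<exists>k\<le>d. (g, h) \<in> (cayley_edges G S) ^^ k)"

definition cayley_model_prob :: "('a, 'b) monoid_scheme \<Rightarrow> real \<Rightarrow> ('a set \<Rightarrow> bool) \<Rightarrow> real" where
  "cayley_model_prob G p P =
     (\<Sum>S\<in>{S. S \<subseteq> carrier G \<and> P S}. p ^ card S * (1 - p) ^ (card (carrier G) - card S))"

end

theory Submission
  imports Defs "HOL-Real_Asymp.Real_Asymp"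
begin


definition wt :: "real \<Rightarrow> 'a set \<Rightarrow> 'a set \<Rightarrow> real" where
  "wt p V S = p ^ card S * (1 - p) ^ (card V - card S)"

definition EE :: "real \<Rightarrow> 'a set \<Rightarrow> ('a set \<Rightarrow> real) \<Rightarrow> real" where
  "EE p V f = (\<Sum>S\<in>Pow V. wt p V S * f S)"

lemma wt_nonneg: "0 \<le> p \<Longrightarrow> p \<le> 1 \<Longrightarrow> 0 \<le> wt p V S"
  by (simp add: wt_def)

lemma EE_insert:
  assumes "finite V" "v \<notin> V"
  shows "EE p (insert v V) f = (1 - p) * EE p V f + p * EE p V (\<lambda>S. f (insert v S))"
proof -
  have fin: "finite (Pow V)" using assms by simp
  have disj: "Pow V \<inter> insert v ` Pow V = {}" using assms by auto
  have inj: "inj_on (insert v) (Pow V)" unfolding inj_on_def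
  proof (intro ballI impI)
    fix x y assume "x \<in> Pow V" "y \<in> Pow V" "insert v x = insert v y"
    then show "x = y" using assms(2) by (metis Pow_iff insert_ident subset_iff)
  qed
  have w1: "wt p (insert v V) S = (1 - p) * wt p V S" if "S \<subseteq> V" for S
  proof -
    have "card S \<le> card V" using that assms card_mono by blast
    then have "card (insert v V) - card S = Suc (card V - card S)" using assms by simp
    then show ?thesis unfolding wt_def by simp
  qed
  have w2: "wt p (insert v V) (insert v S) = p * wt p V S" if "S \<subseteq> V" for S
  proof -
    have fS: "finite S" using that assms finite_subset by blast
    have "v \<notin> S" using that assms by blast
    then have "card (insert v S) = Suc (card S)" using fS by simp
    moreover have "card (insert v V) = Suc (card V)" using assms by simp
    ultimately show ?thesis unfolding wt_def by simp
  qed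
  have "EE p (insert v V) f = (\<Sum>S\<in>Pow V. wt p (insert v V) S * f S)
        + (\<Sum>S\<in>insert v ` Pow V. wt p (insert v V) S * f S)"
    unfolding EE_def Pow_insert using fin disj by (simp add: sum.union_disjoint)
  also have "(\<Sum>S\<in>insert v ` Pow V. wt p (insert v V) S * f S)
      = (\<Sum>S\<in>Pow V. wt p (insert v V) (insert v S) * f (insert v S))"
    using inj by (simp add: sum.reindex)
  also have "\<dots> = p * EE p V (\<lambda>S. f (insert v S))"
    unfolding EE_def sum_distrib_left by (rule sum.cong) (auto simp: w2)
  also have "(\<Sum>S\<in>Pow V. wt p (insert v V) S * f S) = (1 - p) * EE p V f"
    unfolding EE_def sum_distrib_left by (rule sum.cong) (auto simp: w1)
  finally show ?thesis .
qed

lemma EE_empty: "EE p {} f = f {}"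
  by (simp add: EE_def wt_def)

lemma EE_const: "finite V \<Longrightarrow> EE p V (\<lambda>_. c) = c"
proof (induction V rule: finite_induct)
  case empty then show ?case by (simp add: EE_empty)
next
  case (insert v V) then show ?case by (simp add: EE_insert algebra_simps)
qed

lemma EE_cong: "(\<And>S. S \<subseteq> V \<Longrightarrow> f S = g S) \<Longrightarrow> EE p V f = EE p V g"
  unfolding EE_def by (rule sum.cong) auto

lemma EE_add: "EE p V (\<lambda>S. f S + g S) = EE p V f + EE p V g"
  unfolding EE_def by (simp add: distrib_left sum.distrib)

lemma EE_diff: "EE p V (\<lambda>S. f S - g S) = EE p V f - EE p V g"
  unfolding EE_def by (simp add: right_diff_distrib sum_subtractf)

lemma EE_cmult: "EE p V (\<lambda>S. c * f S) = c * EE p V f"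
  unfolding EE_def sum_distrib_left by (rule sum.cong) (auto simp: ac_simps)

lemma EE_multc: "EE p V (\<lambda>S. f S * c) = EE p V f * c"
  unfolding EE_def sum_distrib_right by (rule sum.cong) (auto simp: ac_simps)

lemma EE_uminus: "EE p V (\<lambda>S. - f S) = - EE p V f"
  unfolding EE_def by (simp add: sum_negf)

lemma EE_sum: "EE p V (\<lambda>S. \<Sum>i\<in>I. f i S) = (\<Sum>i\<in>I. EE p V (f i))"
  unfolding EE_def by (simp add: sum_distrib_left sum.swap[of _ I])

lemma EE_mono:
  assumes "0 \<le> p" "p \<le> 1" "\<And>S. S \<subseteq> V \<Longrightarrow> f S \<le> g S"
  shows "EE p V f \<le> EE p V g"
  unfolding EE_def by (rule sum_mono) (auto intro!: mult_left_mono assms wt_nonneg)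

lemma EE_nonneg:
  assumes "0 \<le> p" "p \<le> 1" "\<And>S. S \<subseteq> V \<Longrightarrow> 0 \<le> f S"
  shows "0 \<le> EE p V f"
  using EE_mono[of p V "\<lambda>_. 0" f] assms by (simp add: EE_def)

definition incr :: "'a set \<Rightarrow> ('a set \<Rightarrow> real) \<Rightarrow> bool" where
  "incr V f \<longleftrightarrow> (\<forall>S T. S \<subseteq> T \<longrightarrow> T \<subseteq> V \<longrightarrow> f S \<le> f T)"

lemma harris:
  assumes "finite V" "0 \<le> p" "p \<le> 1" "incr V f" "incr V g"
  shows "EE p V f * EE p V g \<le> EE p V (\<lambda>S. f S * g S)"
  using assms
proof (induction V arbitrary: f g rule: finite_induct)
  case empty then show ?case by (simp add: EE_empty)
next
  case (insert v V)
  define f1 where "f1 = (\<lambda>S. f (insert v S))"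
  define g1 where "g1 = (\<lambda>S. g (insert v S))"
  have i0f: "incr V f" "incr V g" using insert.prems unfolding incr_def by blast+
  have i1f: "incr V f1" "incr V g1" using insert.prems unfolding incr_def f1_def g1_def
    by (meson insert_mono subset_insertI2)+
  have A: "EE p V f * EE p V g \<le> EE p V (\<lambda>S. f S * g S)"
    using insert.IH[OF _ _ i0f] insert.prems by simp
  have B: "EE p V f1 * EE p V g1 \<le> EE p V (\<lambda>S. f1 S * g1 S)"
    using insert.IH[OF _ _ i1f] insert.prems by simp
  have mf: "EE p V f \<le> EE p V f1"
  proof (rule EE_mono)
    fix S assume "S \<subseteq> V"
    then show "f S \<le> f1 S" using insert.prems unfolding incr_def f1_def
      by (meson insert_mono subset_insertI)
  qed (use insert.prems in auto)
  have mg: "EE p V g \<le> EE p V g1"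
  proof (rule EE_mono)
    fix S assume "S \<subseteq> V"
    then show "g S \<le> g1 S" using insert.prems unfolding incr_def g1_def
      by (meson insert_mono subset_insertI)
  qed (use insert.prems in auto)
  define F0 where "F0 = EE p V f"
  define F1 where "F1 = EE p V f1"
  define G0 where "G0 = EE p V g"
  define G1 where "G1 = EE p V g1"
  have key: "((1-p)*F0 + p*F1) * ((1-p)*G0 + p*G1) \<le> (1-p)*(F0*G0) + p*(F1*G1)"
  proof -
    have "0 \<le> p*(1-p)*((F1-F0)*(G1-G0))"
      using insert.prems mf mg unfolding F0_def F1_def G0_def G1_def
      by (intro mult_nonneg_nonneg) auto
    then show ?thesis by (simp add: algebra_simps power2_eq_square)
  qed
  have "EE p (insert v V) f * EE p (insert v V) g = ((1-p)*F0 + p*F1) * ((1-p)*G0 + p*G1)"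
    using insert.hyps by (simp add: EE_insert F0_def F1_def G0_def G1_def f1_def g1_def)
  also have "\<dots> \<le> (1-p)*(F0*G0) + p*(F1*G1)" by (rule key)
  also have "\<dots> \<le> (1-p)*EE p V (\<lambda>S. f S * g S) + p*EE p V (\<lambda>S. f1 S * g1 S)"
    using A B insert.prems unfolding F0_def F1_def G0_def G1_def
    by (intro add_mono mult_left_mono) auto
  also have "\<dots> = EE p (insert v V) (\<lambda>S. f S * g S)"
    using insert.hyps by (simp add: EE_insert f1_def g1_def)
  finally show ?case .
qed



definition decr :: "'a set \<Rightarrow> ('a set \<Rightarrow> real) \<Rightarrow> bool" where
  "decr V f \<longleftrightarrow> (\<forall>S T. S \<subseteq> T \<longrightarrow> T \<subseteq> V \<longrightarrow> f T \<le> f S)"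

lemma harris_mixed:
  assumes "finite V" "0 \<le> p" "p \<le> 1" "incr V f" "decr V g"
  shows "EE p V (\<lambda>S. f S * g S) \<le> EE p V f * EE p V g"
proof -
  have "incr V (\<lambda>S. - g S)" using assms(5) unfolding incr_def decr_def by force
  from harris[OF assms(1-4) this] show ?thesis
    by (simp add: EE_uminus)
qed

lemma harris_decr:
  assumes "finite V" "0 \<le> p" "p \<le> 1" "decr V f" "decr V g"
  shows "EE p V f * EE p V g \<le> EE p V (\<lambda>S. f S * g S)"
proof -
  have "incr V (\<lambda>S. - g S)" "incr V (\<lambda>S. - f S)"
    using assms(4,5) unfolding incr_def decr_def by force+
  from harris[OF assms(1-3) this(2) this(1)] show ?thesis
    by (simp add: EE_uminus)
qed

lemma EE_indicator:
  assumes "finite V"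
  shows "A \<subseteq> V \<Longrightarrow> (\<And>S. S \<subseteq> V \<Longrightarrow> h S = h (S - A)) \<Longrightarrow>
    EE p V (\<lambda>S. of_bool (A \<subseteq> S) * h S) = p ^ card A * EE p V h"
  using assms
proof (induction V arbitrary: A h rule: finite_induct)
  case empty then show ?case by (simp add: EE_empty)
next
  case (insert v V)
  show ?case
  proof (cases "v \<in> A")
    case True
    define A' where "A' = A - {v}"
    have A'V: "A' \<subseteq> V" using insert.prems True A'_def by auto
    have hA': "h S = h (S - A')" if "S \<subseteq> V" for S
    proof -
      have "h S = h (S - A)" using insert.prems(2)[of S] that by blast
      moreover have "h (S - A') = h ((S - A') - A)" using insert.prems(2)[of "S - A'"] that by blast
      moreover have "(S - A') - A = S - A" using A'_def by auto
      ultimately show ?thesis by simp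
    qed
    have hins: "h (insert v S) = h S" if "S \<subseteq> V" for S
    proof -
      have "h (insert v S) = h (insert v S - A)" using insert.prems(2)[of "insert v S"] that by blast
      moreover have "h S = h (S - A)" using insert.prems(2)[of S] that by blast
      moreover have "insert v S - A = S - A" using True by auto
      ultimately show ?thesis by simp
    qed
    have z: "EE p V (\<lambda>S. of_bool (A \<subseteq> S) * h S) = 0"
      by (subst EE_cong[where g = "\<lambda>_. 0"]) (use True insert.hyps in \<open>auto simp: EE_def\<close>)
    have cA: "card A = Suc (card A')"
      using True A'_def A'V insert.hyps by (metis card.remove finite_insert infinite_super insert.prems(1))
    have "EE p V (\<lambda>S. of_bool (A \<subseteq> insert v S) * h (insert v S))
        = EE p V (\<lambda>S. of_bool (A' \<subseteq> S) * h S)"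
      by (rule EE_cong) (auto simp: A'_def hins)
    also have "\<dots> = p ^ card A' * EE p V h"
      using insert.IH[of A' h] A'V hA' insert.hyps by simp
    finally have e: "EE p V (\<lambda>S. of_bool (A \<subseteq> insert v S) * h (insert v S)) = p ^ card A' * EE p V h" .
    have e2: "EE p V (\<lambda>S. h (insert v S)) = EE p V h"
      by (rule EE_cong) (simp add: hins)
    have "EE p (insert v V) (\<lambda>S. of_bool (A \<subseteq> S) * h S)
       = (1-p) * EE p V (\<lambda>S. of_bool (A \<subseteq> S) * h S) + p * EE p V (\<lambda>S. of_bool (A \<subseteq> insert v S) * h (insert v S))"
      by (rule EE_insert[OF insert.hyps])
    also have "\<dots> = p * (p ^ card A' * EE p V h)" unfolding z e by simp
    also have "\<dots> = p ^ card A * EE p (insert v V) h"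
      by (simp add: EE_insert[OF insert.hyps] e2 cA algebra_simps)
    finally show ?thesis .
  next
    case False
    have AV: "A \<subseteq> V" using insert.prems False by auto
    have h0: "h S = h (S - A)" if "S \<subseteq> V" for S using insert.prems(2)[of S] that by blast
    have h1: "h (insert v S) = h (insert v (S - A))" if "S \<subseteq> V" for S
    proof -
      have "h (insert v S) = h (insert v S - A)" using insert.prems(2)[of "insert v S"] that by blast
      moreover have "h (insert v (S - A)) = h (insert v (S - A) - A)" using insert.prems(2)[of "insert v (S - A)"] that by blast
      moreover have "insert v S - A = insert v (S - A) - A" by auto
      ultimately show ?thesis by simp
    qed
    have e1: "EE p V (\<lambda>S. of_bool (A \<subseteq> S) * h S) = p ^ card A * EE p V h"
      using insert.IH[of A h] AV h0 insert.hyps by simp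
    have e2: "EE p V (\<lambda>S. of_bool (A \<subseteq> S) * h (insert v S)) = p ^ card A * EE p V (\<lambda>S. h (insert v S))"
      using insert.IH[OF AV, of "\<lambda>S. h (insert v S)"] h1 insert.hyps by simp
    have e3: "EE p V (\<lambda>S. of_bool (A \<subseteq> insert v S) * h (insert v S)) = EE p V (\<lambda>S. of_bool (A \<subseteq> S) * h (insert v S))"
      by (rule EE_cong) (use False in auto)
    have "EE p (insert v V) (\<lambda>S. of_bool (A \<subseteq> S) * h S)
       = (1-p) * EE p V (\<lambda>S. of_bool (A \<subseteq> S) * h S) + p * EE p V (\<lambda>S. of_bool (A \<subseteq> insert v S) * h (insert v S))"
      by (rule EE_insert[OF insert.hyps])
    also have "\<dots> = (1-p) * (p ^ card A * EE p V h) + p * (p ^ card A * EE p V (\<lambda>S. h (insert v S)))"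
      by (simp only: e1 e2 e3)
    also have "\<dots> = p ^ card A * EE p (insert v V) h"
      by (simp add: EE_insert[OF insert.hyps] algebra_simps)
    finally show ?thesis .
  qed
qed

lemma EE_subset_prob:
  assumes "finite V" "A \<subseteq> V"
  shows "EE p V (\<lambda>S. of_bool (A \<subseteq> S)) = p ^ card A"
  using EE_indicator[OF assms(1,2), of "\<lambda>_. 1" p] assms by (simp add: EE_const)

lemma harris_prod:
  assumes "finite V" "0 \<le> p" "p \<le> 1" "finite Fs" "Fs \<subseteq> Pow V"
  shows "(\<Prod>A\<in>Fs. 1 - p ^ card A) \<le> EE p V (\<lambda>S. of_bool (\<forall>A\<in>Fs. \<not> A \<subseteq> S))"
  using assms(4,5)
proof (induction Fs rule: finite_induct)
  case empty then show ?case using assms by (simp add: EE_const)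
next
  case (insert B Fs)
  have BV: "B \<subseteq> V" using insert.prems by auto
  have d1: "decr V (\<lambda>S. of_bool (\<forall>A\<in>Fs. \<not> A \<subseteq> S))" unfolding decr_def by (auto dest: subset_trans)
  have d2: "decr V (\<lambda>S. of_bool (\<not> B \<subseteq> S))" unfolding decr_def by auto
  have pB: "EE p V (\<lambda>S. of_bool (\<not> B \<subseteq> S)) = 1 - p ^ card B"
  proof -
    have "EE p V (\<lambda>S. of_bool (\<not> B \<subseteq> S)) = EE p V (\<lambda>S. 1 - of_bool (B \<subseteq> S))"
      by (rule EE_cong) simp
    then show ?thesis using EE_subset_prob[OF assms(1) BV, of p] assms(1)
      by (simp add: EE_diff EE_const)
  qed
  have nn: "0 \<le> 1 - p ^ card B" using assms by (simp add: power_le_one)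
  have "(\<Prod>A\<in>insert B Fs. 1 - p ^ card A) = (1 - p ^ card B) * (\<Prod>A\<in>Fs. 1 - p ^ card A)"
    using insert.hyps by simp
  also have "\<dots> \<le> (1 - p ^ card B) * EE p V (\<lambda>S. of_bool (\<forall>A\<in>Fs. \<not> A \<subseteq> S))"
    using insert.IH insert.prems nn by (intro mult_left_mono) auto
  also have "\<dots> \<le> EE p V (\<lambda>S. of_bool (\<forall>A\<in>Fs. \<not> A \<subseteq> S) * of_bool (\<not> B \<subseteq> S))"
    using harris_decr[OF assms(1-3) d1 d2] pB by (simp add: mult.commute)
  also have "\<dots> = EE p V (\<lambda>S. of_bool (\<forall>A\<in>insert B Fs. \<not> A \<subseteq> S))"
    by (rule EE_cong) auto
  finally show ?case .
qed



lemma janson_step: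
  assumes V: "finite V" and p: "0 \<le> p" "p \<le> 1" and F: "finite F" "F \<subseteq> Pow V" and AV: "A \<subseteq> V"
  shows "EE p V (\<lambda>S. of_bool ((\<forall>B\<in>F. \<not> B \<subseteq> S) \<and> \<not> A \<subseteq> S))
     \<le> EE p V (\<lambda>S. of_bool (\<forall>B\<in>F. \<not> B \<subseteq> S)) *
        (1 - p ^ card A + (\<Sum>B\<in>F. of_bool (A \<inter> B \<noteq> {}) * p ^ card (A \<union> B)))"
proof -
  define D where "D = (\<lambda>S. of_bool (\<forall>B\<in>F. \<not> B \<subseteq> S) :: real)"
  define D2 where "D2 = (\<lambda>S. of_bool (\<forall>B\<in>F. B \<inter> A = {} \<longrightarrow> \<not> B \<subseteq> S) :: real)"
  define F1 where "F1 = {B\<in>F. A \<inter> B \<noteq> {}}"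
  define x where "x = p ^ card A"
  define y where "y = (\<Sum>B\<in>F. of_bool (A \<inter> B \<noteq> {}) * p ^ card (A \<union> B))"
  have y': "y = (\<Sum>B\<in>F1. p ^ card (A \<union> B))"
    unfolding y_def F1_def by (subst sum.inter_filter[OF F(1)]) (rule sum.cong, auto)
  have fF1: "finite F1" using F(1) F1_def by simp
  have pw: "of_bool (A \<subseteq> S) * D2 S - (\<Sum>B\<in>F1. of_bool (A \<union> B \<subseteq> S) * D2 S) \<le> of_bool (A \<subseteq> S) * D S" for S
  proof (cases "A \<subseteq> S \<and> D2 S = 1 \<and> D S = 0")
    case True
    then obtain B where B: "B \<in> F" "B \<subseteq> S" unfolding D_def by auto
    have "B \<inter> A \<noteq> {}" using True B unfolding D2_def by (auto split: if_splits)
    then have BF1: "B \<in> F1" using B unfolding F1_def by auto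
    have "1 \<le> (\<Sum>B\<in>F1. of_bool (A \<union> B \<subseteq> S) * D2 S)"
    proof -
      have "(\<Sum>B\<in>{B}. of_bool (A \<union> B \<subseteq> S) * D2 S) \<le> (\<Sum>B\<in>F1. of_bool (A \<union> B \<subseteq> S) * D2 S)"
        by (rule sum_mono2) (use fF1 BF1 D2_def in auto)
      then show ?thesis using True B by simp
    qed
    then show ?thesis using True by simp
  next
    case False
    have nn: "0 \<le> (\<Sum>B\<in>F1. of_bool (A \<union> B \<subseteq> S) * D2 S)" unfolding D2_def by (intro sum_nonneg) auto
    have "of_bool (A \<subseteq> S) * D2 S \<le> of_bool (A \<subseteq> S) * D S"
      using False unfolding D_def D2_def by (auto split: if_splits)
    then show ?thesis using nn by linarith
  qed
  have e1: "EE p V (\<lambda>S. of_bool (A \<subseteq> S) * D2 S) = x * EE p V D2"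
    unfolding x_def
  proof (rule EE_indicator[OF V AV])
    fix S assume "S \<subseteq> V"
    have "(\<forall>B\<in>F. B \<inter> A = {} \<longrightarrow> \<not> B \<subseteq> S) \<longleftrightarrow> (\<forall>B\<in>F. B \<inter> A = {} \<longrightarrow> \<not> B \<subseteq> S - A)" by blast
    then show "D2 S = D2 (S - A)" unfolding D2_def by simp
  qed
  have dD2: "decr V D2" unfolding decr_def D2_def by (auto dest: subset_trans)
  have e2: "EE p V (\<lambda>S. of_bool (A \<union> B \<subseteq> S) * D2 S) \<le> p ^ card (A \<union> B) * EE p V D2" if "B \<in> F1" for B
  proof -
    have ABV: "A \<union> B \<subseteq> V" using that F1_def F(2) AV by auto
    have "incr V (\<lambda>S. of_bool (A \<union> B \<subseteq> S))" unfolding incr_def by auto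
    from harris_mixed[OF V p this dD2] show ?thesis using EE_subset_prob[OF V ABV] by simp
  qed
  have m1: "EE p V (\<lambda>S. of_bool (A \<subseteq> S) * D2 S - (\<Sum>B\<in>F1. of_bool (A \<union> B \<subseteq> S) * D2 S))
        \<le> EE p V (\<lambda>S. of_bool (A \<subseteq> S) * D S)"
    by (rule EE_mono[OF p]) (rule pw)
  have m2: "EE p V (\<lambda>S. of_bool (A \<subseteq> S) * D2 S - (\<Sum>B\<in>F1. of_bool (A \<union> B \<subseteq> S) * D2 S))
       = x * EE p V D2 - (\<Sum>B\<in>F1. EE p V (\<lambda>S. of_bool (A \<union> B \<subseteq> S) * D2 S))"
    by (simp only: EE_diff EE_sum e1)
  have m3: "(\<Sum>B\<in>F1. EE p V (\<lambda>S. of_bool (A \<union> B \<subseteq> S) * D2 S)) \<le> (\<Sum>B\<in>F1. p ^ card (A \<union> B) * EE p V D2)"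
    by (rule sum_mono) (rule e2)
  have m4: "(\<Sum>B\<in>F1. p ^ card (A \<union> B) * EE p V D2) = y * EE p V D2"
    unfolding y' by (simp add: sum_distrib_right)
  have m5: "EE p V D2 * (x - y) = x * EE p V D2 - y * EE p V D2" by (simp add: algebra_simps)
  have low: "EE p V D2 * (x - y) \<le> EE p V (\<lambda>S. of_bool (A \<subseteq> S) * D S)"
    using m1 m2 m3 m4 m5 by linarith
  have split: "EE p V (\<lambda>S. of_bool ((\<forall>B\<in>F. \<not> B \<subseteq> S) \<and> \<not> A \<subseteq> S)) = EE p V D - EE p V (\<lambda>S. of_bool (A \<subseteq> S) * D S)"
    unfolding EE_diff[symmetric] by (rule EE_cong) (auto simp: D_def)
  have DD2: "EE p V D \<le> EE p V D2" by (rule EE_mono[OF p]) (auto simp: D_def D2_def)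
  have D0: "0 \<le> EE p V D" by (rule EE_nonneg[OF p]) (simp add: D_def)
  have ADn: "0 \<le> EE p V (\<lambda>S. of_bool (A \<subseteq> S) * D S)" by (rule EE_nonneg[OF p]) (simp add: D_def)
  show ?thesis
  proof (cases "x - y \<ge> 0")
    case True
    have "EE p V D * (x - y) \<le> EE p V D2 * (x - y)" using DD2 True by (rule mult_right_mono)
    then show ?thesis using split low unfolding D_def[symmetric] x_def[symmetric] y_def[symmetric]
      by (simp add: algebra_simps)
  next
    case False
    have "EE p V D \<le> EE p V D * (1 - x + y)"
      using D0 False mult_right_mono[of x y "EE p V D"] by (simp add: algebra_simps)
    then show ?thesis using split ADn unfolding D_def[symmetric] x_def[symmetric] y_def[symmetric]
      by simp
  qed
qed

definition mu :: "real \<Rightarrow> 'a set set \<Rightarrow> real" where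
  "mu p Fs = (\<Sum>A\<in>Fs. p ^ card A)"

definition Delta :: "real \<Rightarrow> 'a set set \<Rightarrow> real" where
  "Delta p Fs = (\<Sum>A\<in>Fs. \<Sum>B\<in>Fs - {A}. of_bool (A \<inter> B \<noteq> {}) * p ^ card (A \<union> B))"

lemma Delta_insert:
  assumes "finite F" "A \<notin> F" "0 \<le> p"
  shows "Delta p F + (\<Sum>B\<in>F. of_bool (A \<inter> B \<noteq> {}) * p ^ card (A \<union> B)) \<le> Delta p (insert A F)"
proof -
  have "Delta p (insert A F) = (\<Sum>B\<in>insert A F - {A}. of_bool (A \<inter> B \<noteq> {}) * p ^ card (A \<union> B))
     + (\<Sum>C\<in>F. \<Sum>B\<in>insert A F - {C}. of_bool (C \<inter> B \<noteq> {}) * p ^ card (C \<union> B))"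
    unfolding Delta_def using assms by simp
  moreover have "insert A F - {A} = F" using assms by auto
  moreover have "(\<Sum>C\<in>F. \<Sum>B\<in>F - {C}. of_bool (C \<inter> B \<noteq> {}) * p ^ card (C \<union> B))
      \<le> (\<Sum>C\<in>F. \<Sum>B\<in>insert A F - {C}. of_bool (C \<inter> B \<noteq> {}) * p ^ card (C \<union> B))"
    by (intro sum_mono sum_mono2) (use assms in auto)
  ultimately show ?thesis unfolding Delta_def by (simp add: add.commute)
qed

lemma janson:
  assumes V: "finite V" and p: "0 \<le> p" "p \<le> 1" and F: "finite Fs" "Fs \<subseteq> Pow V"
  shows "EE p V (\<lambda>S. of_bool (\<forall>A\<in>Fs. \<not> A \<subseteq> S)) \<le> exp (- mu p Fs + Delta p Fs)"
  using F
proof (induction Fs rule: finite_induct)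
  case empty then show ?case using V by (simp add: EE_const mu_def Delta_def)
next
  case (insert A F)
  define y where "y = (\<Sum>B\<in>F. of_bool (A \<inter> B \<noteq> {}) * p ^ card (A \<union> B))"
  have AV: "A \<subseteq> V" and FV: "F \<subseteq> Pow V" using insert.prems by auto
  have IH: "EE p V (\<lambda>S. of_bool (\<forall>A\<in>F. \<not> A \<subseteq> S)) \<le> exp (- mu p F + Delta p F)"
    using insert.IH FV by simp
  have st: "EE p V (\<lambda>S. of_bool ((\<forall>B\<in>F. \<not> B \<subseteq> S) \<and> \<not> A \<subseteq> S))
     \<le> EE p V (\<lambda>S. of_bool (\<forall>B\<in>F. \<not> B \<subseteq> S)) * (1 - p ^ card A + y)"
    unfolding y_def by (rule janson_step[OF V p insert.hyps(1) FV AV])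
  have ex: "EE p V (\<lambda>S. of_bool (\<forall>B\<in>F. \<not> B \<subseteq> S)) * (1 - p ^ card A + y) \<le> exp (- mu p F + Delta p F) * exp (y - p ^ card A)"
  proof (cases "1 - p ^ card A + y \<ge> 0")
    case True
    have "EE p V (\<lambda>S. of_bool (\<forall>B\<in>F. \<not> B \<subseteq> S)) * (1 - p ^ card A + y) \<le> exp (- mu p F + Delta p F) * (1 - p ^ card A + y)"
      using IH True by (rule mult_right_mono)
    also have "\<dots> \<le> exp (- mu p F + Delta p F) * exp (y - p ^ card A)"
      using exp_ge_add_one_self[of "y - p ^ card A"] by (intro mult_left_mono) (auto simp: algebra_simps)
    finally show ?thesis .
  next
    case False
    have "0 \<le> EE p V (\<lambda>S. of_bool (\<forall>B\<in>F. \<not> B \<subseteq> S))" by (rule EE_nonneg[OF p]) simp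
    then have "EE p V (\<lambda>S. of_bool (\<forall>B\<in>F. \<not> B \<subseteq> S)) * (1 - p ^ card A + y) \<le> 0"
      using False by (simp add: mult_nonneg_nonpos)
    also have "0 \<le> exp (- mu p F + Delta p F) * exp (y - p ^ card A)" by simp
    finally show ?thesis .
  qed
  have mu_ins: "mu p (insert A F) = p ^ card A + mu p F" using insert.hyps by (simp add: mu_def)
  have "exp (- mu p F + Delta p F) * exp (y - p ^ card A) = exp (- mu p (insert A F) + (Delta p F + y))"
    by (simp add: mu_ins exp_add[symmetric])
  also have "\<dots> \<le> exp (- mu p (insert A F) + Delta p (insert A F))"
    using Delta_insert[OF insert.hyps p(1)] unfolding y_def by simp
  finally have "EE p V (\<lambda>S. of_bool ((\<forall>B\<in>F. \<not> B \<subseteq> S) \<and> \<not> A \<subseteq> S)) \<le> exp (- mu p (insert A F) + Delta p (insert A F))"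
    using st ex by linarith
  moreover have "EE p V (\<lambda>S. of_bool (\<forall>B\<in>insert A F. \<not> B \<subseteq> S)) = EE p V (\<lambda>S. of_bool ((\<forall>B\<in>F. \<not> B \<subseteq> S) \<and> \<not> A \<subseteq> S))"
    by (rule EE_cong) auto
  ultimately show ?case by simp
qed



definition sd :: "'a set \<Rightarrow> 'a set \<Rightarrow> 'a set" where
  "sd a b = (a - b) \<union> (b - a)"

definition xsum :: "'a set set \<Rightarrow> 'a set" where
  "xsum A = {i. odd (card {a\<in>A. i \<in> a})}"

lemma xsum_empty[simp]: "xsum {} = {}"
  by (simp add: xsum_def)

lemma xsum_Un:
  assumes "finite A" "finite B" "A \<inter> B = {}"
  shows "xsum (A \<union> B) = sd (xsum A) (xsum B)"
proof -
  have "card {a\<in>A \<union> B. i \<in> a} = card {a\<in>A. i \<in> a} + card {a\<in>B. i \<in> a}" for i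
  proof -
    have "{a\<in>A \<union> B. i \<in> a} = {a\<in>A. i \<in> a} \<union> {a\<in>B. i \<in> a}" by auto
    then show ?thesis using assms by (simp add: card_Un_disjoint disjoint_iff)
  qed
  then show ?thesis unfolding xsum_def sd_def by auto
qed

lemma xsum_single[simp]: "xsum {a} = a"
proof -
  have "{b\<in>{a}. i \<in> b} = (if i \<in> a then {a} else {})" for i by auto
  then show ?thesis unfolding xsum_def by auto
qed

lemma xsum_insert:
  assumes "finite A" "a \<notin> A"
  shows "xsum (insert a A) = sd a (xsum A)"
  using xsum_Un[of "{a}" A] assms by simp

lemma xsum_sub:
  assumes "A \<subseteq> Pow U"
  shows "xsum A \<subseteq> U"
proof
  fix i assume "i \<in> xsum A"
  then have "card {a\<in>A. i \<in> a} \<noteq> 0" unfolding xsum_def by (metis (mono_tags) even_zero mem_Collect_eq)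
  then have "{a\<in>A. i \<in> a} \<noteq> {}" by (metis card.empty)
  then show "i \<in> U" using assms by auto
qed

lemma sd_solve: "sd a x = g \<Longrightarrow> a = sd g x"
  unfolding sd_def by blast

definition Fam :: "'a set set \<Rightarrow> nat \<Rightarrow> 'a set \<Rightarrow> 'a set set set" where
  "Fam V k g = {A. A \<subseteq> V \<and> card A = k \<and> xsum A = g}"

lemma finite_Fam: "finite V \<Longrightarrow> finite (Fam V k g)"
  unfolding Fam_def by (rule finite_subset[of _ "Pow V"]) auto

lemma card_Fam_nat:
  assumes V: "finite V" and k: "1 \<le> k"
  shows "k * card (Fam V k g) \<le> card V choose (k - 1)"
proof -
  define Sig where "Sig = Sigma (Fam V k g) (\<lambda>A. A)"
  have fF: "finite (Fam V k g)" using finite_Fam[OF V] .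
  have fA: "finite A" if "A \<in> Fam V k g" for A
    using that V unfolding Fam_def by (auto intro: finite_subset)
  have "card Sig = (\<Sum>A\<in>Fam V k g. card A)" unfolding Sig_def using fF fA by simp
  also have "\<dots> = (\<Sum>A\<in>Fam V k g. k)" by (rule sum.cong) (auto simp: Fam_def)
  also have "\<dots> = k * card (Fam V k g)" by simp
  finally have cS: "card Sig = k * card (Fam V k g)" .
  have rec: "a = sd g (xsum (A - {a}))" if "A \<in> Fam V k g" "a \<in> A" for A a
  proof -
    have "A = insert a (A - {a})" using that by auto
    then have "xsum A = sd a (xsum (A - {a}))" using xsum_insert[of "A - {a}" a] fA[OF that(1)] by simp
    then show ?thesis using that(1) unfolding Fam_def by (intro sd_solve) auto
  qed
  have inj: "inj_on (\<lambda>(A, a). A - {a}) Sig"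
  proof (rule inj_onI, clarify)
    fix A a A' a' assume h: "(A, a) \<in> Sig" "(A', a') \<in> Sig" "A - {a} = A' - {a'}"
    have h1: "A \<in> Fam V k g" "a \<in> A" "A' \<in> Fam V k g" "a' \<in> A'" using h(1,2) unfolding Sig_def by simp_all
    have "a = sd g (xsum (A - {a}))" by (rule rec[OF h1(1,2)])
    moreover have "a' = sd g (xsum (A' - {a'}))" by (rule rec[OF h1(3,4)])
    ultimately have aa: "a = a'" using h(3) by simp
    have "A = insert a (A - {a})" "A' = insert a' (A' - {a'})" using h1 by blast+
    then have "A = A'" using aa h(3) by metis
    then show "A = A' \<and> a = a'" using aa by simp
  qed
  have img: "(\<lambda>(A, a). A - {a}) ` Sig \<subseteq> {B. B \<subseteq> V \<and> card B = k - 1}"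
  proof
    fix B assume "B \<in> (\<lambda>(A, a). A - {a}) ` Sig"
    then obtain x where "x \<in> Sig" "B = (\<lambda>(A, a). A - {a}) x" by (rule imageE)
    then obtain A a where Aa: "(A, a) \<in> Sig" "B = A - {a}" by (cases x) auto
    then have h: "A \<in> Fam V k g" "a \<in> A" unfolding Sig_def by simp_all
    then have "A \<subseteq> V" "card A = k" unfolding Fam_def by simp_all
    moreover have "card (A - {a}) = card A - 1" using h fA[OF h(1)] by simp
    ultimately show "B \<in> {B. B \<subseteq> V \<and> card B = k - 1}" using Aa by auto
  qed
  have "card Sig \<le> card {B. B \<subseteq> V \<and> card B = k - 1}"
    by (rule card_inj_on_le[OF inj img]) (use V in simp)
  also have "\<dots> = card V choose (k - 1)" by (rule n_subsets[OF V])
  finally show ?thesis using cS by simp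
qed

lemma card_Fam:
  assumes V: "finite V" and k: "1 \<le> k"
  shows "real (card (Fam V k g)) \<le> real (card V) ^ (k - 1) / fact k"
proof -
  have a1: "k * card (Fam V k g) * fact (k - 1) \<le> (card V choose (k - 1)) * fact (k - 1)"
    by (rule mult_right_mono[OF card_Fam_nat[OF V k, of g]]) simp
  have a: "k * card (Fam V k g) * fact (k - 1) \<le> card V ^ (k - 1)"
    by (rule order_trans[OF a1 binomial_fact_pow])
  have fk: "(fact k :: nat) = k * fact (k - 1)" using k fact_reduce[of k, where 'a=nat] by simp
  have "card (Fam V k g) * fact k = k * card (Fam V k g) * fact (k - 1)"
    unfolding fk by (simp only: ac_simps)
  then have "card (Fam V k g) * fact k \<le> card V ^ (k - 1)" using a by (simp only:)
  then have "real (card (Fam V k g) * fact k) \<le> real (card V ^ (k - 1))" by (simp only: of_nat_le_iff)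
  then have "real (card (Fam V k g)) * fact k \<le> real (card V) ^ (k - 1)" by simp
  then show ?thesis by (simp add: field_simps)
qed



lemma Z2n_carrier: "carrier (Z2n n) = Pow {..<n}"
  by (simp add: Z2n_def)

lemma Z2n_mult: "x \<otimes>\<^bsub>Z2n n\<^esub> y = sd x y"
  by (simp add: Z2n_def sd_def)

lemma Z2n_inv: "x \<in> carrier (Z2n n) \<Longrightarrow> inv\<^bsub>Z2n n\<^esub> x = x"
  unfolding m_inv_def
proof (rule the_equality)
  assume "x \<in> carrier (Z2n n)"
  then show "x \<in> carrier (Z2n n) \<and> x \<otimes>\<^bsub>Z2n n\<^esub> x = \<one>\<^bsub>Z2n n\<^esub> \<and> x \<otimes>\<^bsub>Z2n n\<^esub> x = \<one>\<^bsub>Z2n n\<^esub>"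
    by (simp add: Z2n_def)
next
  fix y assume "y \<in> carrier (Z2n n) \<and> x \<otimes>\<^bsub>Z2n n\<^esub> y = \<one>\<^bsub>Z2n n\<^esub> \<and> y \<otimes>\<^bsub>Z2n n\<^esub> x = \<one>\<^bsub>Z2n n\<^esub>"
  then have "(x - y) \<union> (y - x) = {}" by (simp add: Z2n_def)
  then show "y = x" by blast
qed

lemma edge_sd:
  assumes "(x, y) \<in> cayley_edges (Z2n n) S"
  shows "sd x y \<in> S"
proof -
  have xy: "x \<in> carrier (Z2n n)" "y \<in> carrier (Z2n n)" using assms by (auto simp: cayley_edges_def)
  have "sd y x = sd x y" by (auto simp: sd_def)
  then show ?thesis using assms xy by (auto simp: cayley_edges_def Z2n_inv Z2n_mult)
qed

lemma walk_xsum: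
  assumes "finite S"
  shows "(x, z) \<in> (cayley_edges (Z2n n) S) ^^ k \<Longrightarrow> \<exists>A\<subseteq>S. card A \<le> k \<and> xsum A = sd x z"
proof (induction k arbitrary: z)
  case 0
  then show ?case by (auto simp: sd_def intro!: exI[of _ "{}"])
next
  case (Suc k)
  then obtain y where y: "(x, y) \<in> (cayley_edges (Z2n n) S) ^^ k" "(y, z) \<in> cayley_edges (Z2n n) S"
    by auto
  obtain A where A: "A \<subseteq> S" "card A \<le> k" "xsum A = sd x y" using Suc.IH[OF y(1)] by blast
  have fA: "finite A" using A(1) assms by (rule finite_subset)
  define s where "s = sd y z"
  have sS: "s \<in> S" unfolding s_def by (rule edge_sd[OF y(2)])
  have zz: "sd x z = sd s (sd x y)" unfolding s_def sd_def by blast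
  show ?case
  proof (cases "s \<in> A")
    case True
    have "xsum A = sd s (xsum (A - {s}))"
      using xsum_insert[of "A - {s}" s] fA True by (simp add: insert_absorb)
    then have "xsum (A - {s}) = sd x z" using A(3) zz unfolding sd_def by blast
    moreover have "card (A - {s}) \<le> Suc k" using A(2) fA True by simp
    ultimately show ?thesis using A(1) by (intro exI[of _ "A - {s}"]) auto
  next
    case False
    have "xsum (insert s A) = sd x z" using xsum_insert[OF fA False] A(3) zz by simp
    moreover have "card (insert s A) \<le> Suc k" using A(2) fA False by simp
    ultimately show ?thesis using A(1) sS by (intro exI[of _ "insert s A"]) auto
  qed
qed

lemma diam_cover:
  assumes "S \<subseteq> Pow {..<n}" "cayley_diam_le (Z2n n) S d" "g \<in> Pow {..<n}"
  shows "\<exists>A\<subseteq>S. card A \<le> d \<and> xsum A = g"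
proof -
  have fS: "finite S" using assms(1) by (rule finite_subset) simp
  have c: "{} \<in> carrier (Z2n n)" "g \<in> carrier (Z2n n)" using assms(3) by (simp_all add: Z2n_carrier)
  have "\<forall>g\<in>carrier (Z2n n). \<forall>h\<in>carrier (Z2n n). \<exists>k\<le>d. (g, h) \<in> (cayley_edges (Z2n n) S) ^^ k"
    using assms(2) unfolding cayley_diam_le_def .
  then have "\<exists>k\<le>d. ({}, g) \<in> (cayley_edges (Z2n n) S) ^^ k"
    using c by simp
  then obtain k where k: "k \<le> d" "({}, g) \<in> (cayley_edges (Z2n n) S) ^^ k" by (elim exE conjE)
  obtain A where A: "A \<subseteq> S" "card A \<le> k" "xsum A = sd {} g" using walk_xsum[OF fS k(2)] by (elim exE conjE)
  have "sd {} g = g" by (simp add: sd_def)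
  then show ?thesis using A k(1) by (intro exI[of _ A]) simp
qed

definition Rep :: "'a set set \<Rightarrow> nat \<Rightarrow> 'a set \<Rightarrow> 'a set set set" where
  "Rep V d g = {A. A \<subseteq> V \<and> card A \<le> d \<and> xsum A = g}"

lemma finite_Rep: "finite V \<Longrightarrow> finite (Rep V d g)"
  unfolding Rep_def by (rule finite_subset[of _ "Pow V"]) auto

lemma Rep_nonempty_card:
  assumes "finite V" "g \<noteq> {}" "A \<in> Rep V d g"
  shows "1 \<le> card A"
proof (rule ccontr)
  assume "\<not> 1 \<le> card A"
  then have "card A = 0" by simp
  moreover have "finite A" using assms unfolding Rep_def by (auto intro: finite_subset)
  ultimately have "A = {}" by simp
  then show False using assms unfolding Rep_def by simp
qed

lemma mu_Rep:
  assumes V: "finite V" and g: "g \<noteq> {}"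
  shows "mu p (Rep V d g) = (\<Sum>k\<in>{1..d}. real (card (Fam V k g)) * p ^ k)"
proof -
  have "mu p (Rep V d g) = (\<Sum>k\<in>{1..d}. \<Sum>A\<in>{A\<in>Rep V d g. card A = k}. p ^ card A)"
    unfolding mu_def
    by (rule sum.group[symmetric]) (use finite_Rep[OF V] Rep_nonempty_card[OF V g] in \<open>auto simp: Rep_def\<close>)
  also have "\<dots> = (\<Sum>k\<in>{1..d}. \<Sum>A\<in>Fam V k g. p ^ k)"
  proof (rule sum.cong[OF refl])
    fix k assume "k \<in> {1..d}"
    then have "{A\<in>Rep V d g. card A = k} = Fam V k g" unfolding Rep_def Fam_def by auto
    then show "(\<Sum>A\<in>{A\<in>Rep V d g. card A = k}. p ^ card A) = (\<Sum>A\<in>Fam V k g. p ^ k)"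
      by (intro sum.cong) auto
  qed
  also have "\<dots> = (\<Sum>k\<in>{1..d}. real (card (Fam V k g)) * p ^ k)" by simp
  finally show ?thesis .
qed

lemma overlap_bound:
  assumes V: "finite V" and A: "A \<subseteq> V" "card A = d" and p: "0 \<le> p"
    and th: "0 \<le> \<theta>" and H: "\<And>i. 1 \<le> i \<Longrightarrow> i < d \<Longrightarrow> real (card V) ^ (i - 1) / fact i * p ^ i \<le> \<theta>"
  shows "(\<Sum>B\<in>Fam V d g - {A}. of_bool (A \<inter> B \<noteq> {}) * p ^ card (A \<union> B)) \<le> 2 ^ d * p ^ d * \<theta>"
proof -
  have fA: "finite A" using A V by (rule_tac finite_subset) auto
  define Bs where "Bs = {B \<in> Fam V d g - {A}. A \<inter> B \<noteq> {}}"
  define Cs where "Cs = {C. C \<subseteq> A \<and> C \<noteq> {} \<and> C \<noteq> A}"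
  define Gf where "Gf = (\<lambda>C. Fam V (d - card C) (sd g (xsum C)))"
  define \<phi> where "\<phi> = (\<lambda>B. (A \<inter> B, B - A))"
  define f where "f = (\<lambda>(C :: 'a set set, D :: 'a set set). p ^ (d + card D))"
  have fFam: "finite (Fam V d g)" by (rule finite_Fam[OF V])
  have fBs: "finite Bs" unfolding Bs_def using fFam by simp
  have fCs: "finite Cs" unfolding Cs_def using fA by (rule_tac finite_subset[of _ "Pow A"]) auto
  have fB: "finite B" if "B \<in> Fam V d g" for B using that V unfolding Fam_def by (auto intro: finite_subset)
  have e0: "(\<Sum>B\<in>Fam V d g - {A}. of_bool (A \<inter> B \<noteq> {}) * p ^ card (A \<union> B)) = (\<Sum>B\<in>Bs. p ^ card (A \<union> B))"
    unfolding Bs_def using fFam by (subst sum.inter_filter) (simp, rule sum.cong, auto)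
  have inj: "inj_on \<phi> Bs"
  proof (rule inj_onI)
    fix B B' assume "B \<in> Bs" "B' \<in> Bs" "\<phi> B = \<phi> B'"
    then have "A \<inter> B = A \<inter> B'" "B - A = B' - A" unfolding \<phi>_def by auto
    then show "B = B'" by blast
  qed
  have memb: "\<phi> B \<in> Sigma Cs Gf \<and> p ^ card (A \<union> B) = f (\<phi> B)" if B: "B \<in> Bs" for B
  proof -
    have BF: "B \<in> Fam V d g" "B \<noteq> A" "A \<inter> B \<noteq> {}" using B unfolding Bs_def by auto
    have fBB: "finite B" using fB[OF BF(1)] .
    have cB: "card B = d" "B \<subseteq> V" "xsum B = g" using BF(1) unfolding Fam_def by auto
    have C1: "A \<inter> B \<noteq> A"
    proof
      assume "A \<inter> B = A"
      then have "A \<subseteq> B" by blast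
      then have "A = B" using card_subset_eq[OF fBB] cB A by simp
      then show False using BF by simp
    qed
    have cD: "card (B - A) = d - card (A \<inter> B)"
      using card_Diff_subset_Int[of A B] fA cB by (simp add: Int_commute card_Diff_subset_Int)
    have BU: "B = (A \<inter> B) \<union> (B - A)" by blast
    have "xsum B = sd (xsum (A \<inter> B)) (xsum (B - A))"
      by (subst BU, rule xsum_Un) (use fA fBB in auto)
    then have xD: "xsum (B - A) = sd g (xsum (A \<inter> B))" using cB unfolding sd_def by blast
    have in1: "A \<inter> B \<in> Cs" using BF(3) C1 unfolding Cs_def by auto
    have in2: "B - A \<in> Gf (A \<inter> B)" unfolding Gf_def Fam_def using cB cD xD by auto
    have "card (A \<union> B) = d + card (B - A)"
    proof -
      have "A \<union> B = A \<union> (B - A)" by blast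
      moreover have "card (A \<union> (B - A)) = card A + card (B - A)"
        by (rule card_Un_disjoint) (use fA fBB in auto)
      ultimately show ?thesis using A by simp
    qed
    then show ?thesis using in1 in2 unfolding \<phi>_def f_def by simp
  qed
  have "(\<Sum>B\<in>Bs. p ^ card (A \<union> B)) = (\<Sum>B\<in>Bs. f (\<phi> B))" using memb by (intro sum.cong) auto
  also have "\<dots> = (\<Sum>x\<in>\<phi> ` Bs. f x)" using sum.reindex[OF inj, of f] by (simp add: comp_def)
  also have "\<dots> \<le> (\<Sum>x\<in>Sigma Cs Gf. f x)"
  proof (rule sum_mono2)
    show "finite (Sigma Cs Gf)" using fCs by (auto simp: Gf_def intro!: finite_Fam V)
    show "\<phi> ` Bs \<subseteq> Sigma Cs Gf" using memb by (meson image_subsetI)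
    show "\<And>x. x \<in> Sigma Cs Gf - \<phi> ` Bs \<Longrightarrow> 0 \<le> f x" using p by (auto simp: f_def)
  qed
  also have "\<dots> = (\<Sum>C\<in>Cs. \<Sum>D\<in>Gf C. f (C, D))" unfolding f_def by (subst sum.Sigma) (use fCs V in \<open>auto simp: Gf_def intro: finite_Fam\<close>)
  also have "\<dots> \<le> (\<Sum>C\<in>Cs. p ^ d * \<theta>)"
  proof (rule sum_mono)
    fix C assume C: "C \<in> Cs"
    define i where "i = d - card C"
    have fC: "finite C" using C fA unfolding Cs_def by (auto intro: finite_subset)
    have "C \<subset> A" using C unfolding Cs_def by blast
    then have cC: "card C < d" using psubset_card_mono[OF fA] A(2) by simp
    have cC1: "card C \<ge> 1" using C fC unfolding Cs_def by (simp add: Suc_leI card_gt_0_iff)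
    have i1: "1 \<le> i" "i < d" using cC cC1 unfolding i_def by auto
    have "(\<Sum>D\<in>Gf C. f (C, D)) = (\<Sum>D\<in>Gf C. p ^ (d + i))"
      by (rule sum.cong) (auto simp: f_def Gf_def Fam_def i_def)
    also have "\<dots> = real (card (Gf C)) * (p ^ d * p ^ i)" by (simp add: power_add)
    also have "\<dots> \<le> (real (card V) ^ (i - 1) / fact i) * (p ^ d * p ^ i)"
      by (rule mult_right_mono) (use card_Fam[OF V i1(1)] p in \<open>auto simp: Gf_def i_def\<close>)
    also have "\<dots> = p ^ d * (real (card V) ^ (i - 1) / fact i * p ^ i)" by (simp add: algebra_simps)
    also have "\<dots> \<le> p ^ d * \<theta>" by (rule mult_left_mono[OF H[OF i1]]) (use p in simp)
    finally show "(\<Sum>D\<in>Gf C. f (C, D)) \<le> p ^ d * \<theta>" .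
  qed
  also have "\<dots> = real (card Cs) * (p ^ d * \<theta>)" by simp
  also have "\<dots> \<le> 2 ^ d * (p ^ d * \<theta>)"
  proof (rule mult_right_mono)
    have "card Cs \<le> card (Pow A)" by (rule card_mono) (use fA in \<open>auto simp: Cs_def\<close>)
    then have "card Cs \<le> 2 ^ d" using fA A by (simp add: card_Pow)
    then show "real (card Cs) \<le> 2 ^ d" by (metis of_nat_le_iff of_nat_numeral of_nat_power)
    show "0 \<le> p ^ d * \<theta>" using p th by simp
  qed
  finally show ?thesis using e0 by (simp add: algebra_simps)
qed



lemma second_moment:
  fixes Q :: "'b \<Rightarrow> 'a set \<Rightarrow> bool"
  assumes V: "finite V" and p: "0 \<le> p" "p \<le> 1" and T: "finite T"
    and Rr: "0 \<le> Rr"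
    and pair: "\<And>g h. g \<in> T \<Longrightarrow> h \<in> T \<Longrightarrow> g \<noteq> h \<Longrightarrow>
        EE p V (\<lambda>S. of_bool (Q g S \<and> Q h S)) \<le> Rr * EE p V (\<lambda>S. of_bool (Q g S)) * EE p V (\<lambda>S. of_bool (Q h S))"
    and m: "0 < (\<Sum>g\<in>T. EE p V (\<lambda>S. of_bool (Q g S)))"
  shows "EE p V (\<lambda>S. of_bool (\<forall>g\<in>T. \<not> Q g S)) \<le> 1 / (\<Sum>g\<in>T. EE p V (\<lambda>S. of_bool (Q g S))) + Rr - 1"
proof -
  define a where "a = (\<lambda>g. EE p V (\<lambda>S. of_bool (Q g S)))"
  define M where "M = (\<Sum>g\<in>T. a g)"
  define X where "X = (\<lambda>S. \<Sum>g\<in>T. of_bool (Q g S) :: real)"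
  have a0: "0 \<le> a g" for g unfolding a_def by (rule EE_nonneg[OF p]) simp
  have EX: "EE p V X = M" unfolding X_def M_def a_def by (rule EE_sum)
  have X2: "X S * X S = (\<Sum>g\<in>T. \<Sum>h\<in>T. of_bool (Q g S \<and> Q h S))" for S
    unfolding X_def sum_product by (intro sum.cong refl) simp
  have pw: "of_bool (\<forall>g\<in>T. \<not> Q g S) * (M * M) \<le> (X S - M) * (X S - M)" for S
  proof (cases "\<forall>g\<in>T. \<not> Q g S")
    case True
    then have "X S = 0" unfolding X_def by simp
    then show ?thesis using True by simp
  next
    case False
    from False have e: "(\<forall>g\<in>T. \<not> Q g S) = False" by blast
    show ?thesis unfolding e by simp
  qed
  have "EE p V (\<lambda>S. of_bool (\<forall>g\<in>T. \<not> Q g S)) * (M * M) = EE p V (\<lambda>S. of_bool (\<forall>g\<in>T. \<not> Q g S) * (M * M))"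
    by (rule EE_multc[symmetric])
  also have "\<dots> \<le> EE p V (\<lambda>S. (X S - M) * (X S - M))" by (rule EE_mono[OF p]) (rule pw)
  also have "EE p V (\<lambda>S. (X S - M) * (X S - M)) = EE p V (\<lambda>S. X S * X S - 2 * M * X S + M * M)"
    by (rule EE_cong) (simp add: algebra_simps)
  also have "\<dots> = EE p V (\<lambda>S. X S * X S) - 2 * M * EE p V X + M * M"
    using V by (simp add: EE_add EE_diff EE_cmult EE_const)
  also have "\<dots> = EE p V (\<lambda>S. X S * X S) - M * M" using EX by simp
  also have "EE p V (\<lambda>S. X S * X S) = (\<Sum>g\<in>T. \<Sum>h\<in>T. EE p V (\<lambda>S. of_bool (Q g S \<and> Q h S)))"
    by (simp only: X2 EE_sum)
  also have "\<dots> \<le> (\<Sum>g\<in>T. \<Sum>h\<in>T. (if g = h then a g else 0) + Rr * a g * a h)"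
  proof (intro sum_mono)
    fix g h assume gh: "g \<in> T" "h \<in> T"
    show "EE p V (\<lambda>S. of_bool (Q g S \<and> Q h S)) \<le> (if g = h then a g else 0) + Rr * a g * a h"
    proof (cases "g = h")
      case True
      have "0 \<le> Rr * a g * a h" using Rr a0 by simp
      then show ?thesis using True unfolding a_def by simp
    next
      case False
      then show ?thesis using pair[OF gh False] unfolding a_def by simp
    qed
  qed
  also have "\<dots> = M + Rr * (M * M)"
  proof -
    have s1: "(\<Sum>g\<in>T. \<Sum>h\<in>T. (if g = h then a g else 0)) = M" unfolding M_def using T
      by (simp add: sum.delta sum.delta')
    have "M * M = (\<Sum>g\<in>T. \<Sum>h\<in>T. a g * a h)" unfolding M_def by (rule sum_product)
    then have s2: "Rr * (M * M) = (\<Sum>g\<in>T. \<Sum>h\<in>T. Rr * a g * a h)"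
      by (simp add: sum_distrib_left mult.assoc)
    show ?thesis by (simp only: sum.distrib s1 s2)
  qed
  finally have "EE p V (\<lambda>S. of_bool (\<forall>g\<in>T. \<not> Q g S)) * (M * M) \<le> M + Rr * (M * M) - M * M" by simp
  moreover have Mp: "0 < M" using m unfolding M_def a_def .
  ultimately have "EE p V (\<lambda>S. of_bool (\<forall>g\<in>T. \<not> Q g S)) \<le> (M + Rr * (M * M) - M * M) / (M * M)"
    by (simp add: pos_le_divide_eq)
  also have "\<dots> = 1 / M + Rr - 1" using Mp by (simp add: field_simps)
  finally show ?thesis unfolding M_def a_def .
qed

lemma term_bound:
  fixes N L p :: real and d i :: nat
  assumes N: "N = exp L" and L: "1 \<le> L" and p: "0 \<le> p"
    and pd: "p ^ d \<le> fact d * L / N ^ (d - 1)" and i: "1 \<le> i" "i < d"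
  shows "N ^ (i - 1) / fact i * p ^ i \<le> fact d * L * exp (- L / d)"
proof -
  define q where "q = p * N"
  define M where "M = fact d * L * N"
  have Np: "0 < N" using N by simp
  have N1: "1 \<le> N" using N L by simp
  have q0: "0 \<le> q" unfolding q_def using p Np by simp
  have d1: "1 \<le> d" using i by simp
  have fd: "1 \<le> (fact d :: real)" by simp
  have fL: "1 \<le> fact d * L" using mult_mono[OF fd L] by simp
  have M1: "N \<le> M" unfolding M_def using mult_right_mono[OF fL, of N] Np by simp
  have qd: "q ^ d \<le> M"
  proof -
    have "q ^ d = p ^ d * N ^ d" unfolding q_def by (simp add: power_mult_distrib)
    also have "\<dots> \<le> fact d * L / N ^ (d - 1) * N ^ d" by (rule mult_right_mono[OF pd]) (use Np in simp)
    also have "N ^ d = N ^ (d - 1) * N" using d1 by (metis Suc_diff_le diff_Suc_1 power_Suc2)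
    also have "fact d * L / N ^ (d - 1) * (N ^ (d - 1) * N) = M" unfolding M_def using Np by simp
    finally show ?thesis .
  qed
  have lhs: "N ^ (i - 1) / fact i * p ^ i \<le> q ^ i / N"
  proof -
    have "N ^ (i - 1) * p ^ i = q ^ i / N"
    proof -
      have "q ^ i = p ^ i * N ^ i" unfolding q_def by (simp add: power_mult_distrib)
      also have "N ^ i = N ^ (i - 1) * N" using i by (metis Suc_diff_le diff_Suc_1 power_Suc2)
      finally show ?thesis using Np by simp
    qed
    moreover have "N ^ (i - 1) / fact i * p ^ i \<le> N ^ (i - 1) * p ^ i"
    proof -
      have "0 \<le> N ^ (i - 1) * p ^ i" using Np p by simp
      moreover have "(1::real) \<le> fact i" by simp
      ultimately have "N ^ (i - 1) * p ^ i * 1 \<le> N ^ (i - 1) * p ^ i * fact i" by (intro mult_left_mono)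
      then have "N ^ (i - 1) * p ^ i / fact i \<le> N ^ (i - 1) * p ^ i" by (simp add: divide_le_eq)
      then show ?thesis by simp
    qed
    ultimately show ?thesis by simp
  qed
  have main: "q ^ i \<le> M * exp (- L / d)"
  proof (cases "q \<le> 1")
    case True
    have "q ^ i \<le> 1" using True q0 by (simp add: power_le_one)
    also have "1 \<le> M * exp (- L / d)"
    proof -
      have "exp (L - L / d) \<le> M * exp (- L / d)"
      proof -
        have "exp (L - L / d) = N * exp (- L / d)" using N by (simp add: exp_diff exp_minus field_simps)
        then show ?thesis using M1 by simp
      qed
      moreover have "1 \<le> exp (L - L / d)"
      proof -
        have "L / d \<le> L" using L d1 by (simp add: divide_le_eq)
        then have "0 \<le> L - L / d" by simp
        then show ?thesis using one_le_exp_iff by blast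
      qed
      ultimately show ?thesis by linarith
    qed
    finally show ?thesis .
  next
    case False
    then have q1: "1 < q" by simp
    have "q ^ i \<le> q ^ (d - 1)" using q1 i by (intro power_increasing) auto
    also have "q ^ (d - 1) = exp (real (d - 1) * ln q)" using q1 exp_of_nat_mult[of "d - 1" "ln q"] by simp
    also have "\<dots> \<le> exp (ln M - L / d)"
    proof -
      have lnq: "d * ln q \<le> ln M"
      proof -
        have qp: "0 < q ^ d" using q1 by simp
        have Mp: "0 < M" using qp qd by linarith
        have "ln (q ^ d) \<le> ln M" using qd ln_le_cancel_iff[OF qp Mp] by simp
        then show ?thesis using q1 by (simp add: ln_realpow)
      qed
      have lnM: "L \<le> ln M" using M1 N Np by (metis ln_exp ln_le_cancel_iff order_less_le_trans)
      have lq0: "0 \<le> ln q" using q1 by simp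
      have lq: "ln q \<le> ln M / d" using lnq d1 by (simp add: le_divide_eq mult.commute)
      have "real (d - 1) * ln q \<le> real (d - 1) * (ln M / d)" using lq by (rule mult_left_mono) simp
      also have "real (d - 1) * (ln M / d) = ln M - ln M / d" using d1 by (simp add: of_nat_diff field_simps)
      also have "\<dots> \<le> ln M - L / d" using lnM d1 by (simp add: divide_right_mono)
      finally show ?thesis by simp
    qed
    also have "\<dots> = M * exp (- L / d)"
    proof -
      have "0 < M" using M1 Np by simp
      then show ?thesis by (simp add: exp_diff exp_minus field_simps)
    qed
    finally show ?thesis .
  qed
  have "q ^ i / N \<le> M * exp (- L / d) / N" using main Np by (simp add: divide_right_mono)
  also have "\<dots> = fact d * L * exp (- L / d)" unfolding M_def using Np by simp
  finally show ?thesis using lhs by simp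
qed

lemma phi_bound:
  fixes L :: real and d :: nat
  assumes Lp: "0 < L" and d: "2 \<le> d" and lnL: "2 \<le> ln L" and dd: "real d ^ 2 \<le> L / (2 * ln L)"
  shows "2 ^ d * d * fact d * L ^ 2 * exp (- L / d) \<le> L ^ 2 * exp (- sqrt L)"
proof -
  have lp: "0 < 2 * ln L" using lnL by simp
  have dl0: "real d ^ 2 * (2 * ln L) \<le> L" using dd lp by (simp add: le_divide_eq)
  have dl: "real d ^ 2 * ln L \<le> L / 2" using dl0 by simp
  have d4: "4 * real d ^ 2 \<le> L"
  proof -
    have "4 * real d ^ 2 \<le> (2 * ln L) * real d ^ 2" using lnL by (intro mult_right_mono) auto
    then show ?thesis using dl0 by (simp add: mult.commute)
  qed
  have c1: "2 ^ d * real d * fact d \<le> L ^ d"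
  proof -
    have "(fact d :: real) \<le> real d ^ d" using fact_le_power[of d, where 'a=real] by simp
    then have "2 ^ d * real d * fact d \<le> 2 ^ d * real d * real d ^ d" by (simp add: mult_left_mono)
    also have "\<dots> = (2 * real d) ^ d * real d" by (simp add: power_mult_distrib)
    also have "\<dots> \<le> (2 * real d) ^ d * (2 * real d) ^ d"
    proof -
      have "real d \<le> 2 * real d" by simp
      also have "2 * real d \<le> (2 * real d) ^ d" using d by (intro self_le_power) auto
      finally show ?thesis by (intro mult_left_mono) auto
    qed
    also have "\<dots> = (4 * real d ^ 2) ^ d"
    proof -
      have "(2 * real d) * (2 * real d) = 4 * real d ^ 2" by (simp add: power2_eq_square)
      then show ?thesis by (metis power_mult_distrib)
    qed
    also have "\<dots> \<le> L ^ d" using d4 by (intro power_mono) auto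
    finally show ?thesis .
  qed
  have c2: "L ^ d * exp (- L / d) \<le> exp (- sqrt L)"
  proof -
    have "L ^ d = exp (real d * ln L)" using Lp exp_of_nat_mult[of d "ln L"] by simp
    then have "L ^ d * exp (- L / d) = exp (d * ln L - L / d)" by (simp add: exp_diff exp_minus field_simps)
    also have "\<dots> \<le> exp (- sqrt L)"
    proof -
      have dp: "0 < real d" using d by simp
      have s: "2 * real d \<le> sqrt L"
        using real_le_rsqrt[of "2 * real d" L] d4 by (simp add: power_mult_distrib)
      have "real d * sqrt L \<le> L / 2"
      proof -
        have "2 * real d * sqrt L \<le> sqrt L * sqrt L" using s Lp by (intro mult_right_mono) auto
        also have "\<dots> = L" using Lp by simp
        finally show ?thesis by simp
      qed
      then have "real d * (real d * ln L) + real d * sqrt L \<le> L"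
        using dl by (simp add: power2_eq_square mult.assoc)
      then have "real d * (real d * ln L + sqrt L) \<le> L" by (simp add: algebra_simps)
      then have "real d * ln L + sqrt L \<le> L / d" using dp by (simp add: le_divide_eq mult.commute)
      then show ?thesis by simp
    qed
    finally show ?thesis .
  qed
  have "2 ^ d * d * fact d * L ^ 2 * exp (- L / d) = (2 ^ d * d * fact d) * (L ^ 2 * exp (- L / d))" by simp
  also have "\<dots> \<le> L ^ d * (L ^ 2 * exp (- L / d))" using c1 by (intro mult_right_mono) auto
  also have "\<dots> = L ^ 2 * (L ^ d * exp (- L / d))" by simp
  also have "\<dots> \<le> L ^ 2 * exp (- sqrt L)" using c2 by (intro mult_left_mono) auto
  finally show ?thesis .
qed



lemma prob_eq: "cayley_model_prob (Z2n n) p P = EE p (Pow {..<n}) (\<lambda>S. of_bool (P S))"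
proof -
  have e: "{S. S \<subseteq> carrier (Z2n n) \<and> P S} = {S \<in> Pow (Pow {..<n}). P S}" by (auto simp: Z2n_carrier)
  show ?thesis unfolding cayley_model_prob_def e unfolding EE_def wt_def Z2n_carrier
    by (subst sum.inter_filter) (simp, rule sum.cong, auto)
qed

lemma prod_lower:
  assumes F: "finite Fs" "\<And>A. A \<in> Fs \<Longrightarrow> 1 \<le> card A" and p: "0 \<le> p" "p \<le> 1/2"
  shows "exp (- (1 + 2 * p) * mu p Fs) \<le> (\<Prod>A\<in>Fs. 1 - p ^ card A)"
proof -
  have "- (1 + 2 * p) * mu p Fs = (\<Sum>A\<in>Fs. - (1 + 2 * p) * p ^ card A)"
    unfolding mu_def by (rule sum_distrib_left)
  then have "exp (- (1 + 2 * p) * mu p Fs) = (\<Prod>A\<in>Fs. exp (- (1 + 2 * p) * p ^ card A))"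
    using exp_sum[OF F(1)] by metis
  also have "\<dots> \<le> (\<Prod>A\<in>Fs. 1 - p ^ card A)"
  proof (rule prod_mono, rule conjI)
    fix A assume A: "A \<in> Fs"
    define x where "x = p ^ card A"
    have x0: "0 \<le> x" unfolding x_def using p by simp
    have xp: "x \<le> p" unfolding x_def using power_decreasing[of 1 "card A" p] F(2)[OF A] p by simp
    have x2: "x \<le> 1/2" using xp p by simp
    show "0 \<le> exp (- (1 + 2 * p) * p ^ card A)" by simp
    have "- (1 + 2 * p) * x \<le> - x - 2 * x\<^sup>2"
    proof -
      have "x * x \<le> p * x" using xp x0 by (rule mult_right_mono)
      then show ?thesis by (simp add: power2_eq_square algebra_simps)
    qed
    also have "\<dots> \<le> ln (1 - x)" by (rule ln_one_minus_pos_lower_bound[OF x0 x2])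
    finally have "exp (- (1 + 2 * p) * x) \<le> exp (ln (1 - x))" by simp
    also have "\<dots> = 1 - x" using x2 by simp
    finally show "exp (- (1 + 2 * p) * p ^ card A) \<le> 1 - p ^ card A" unfolding x_def .
  qed
  finally show ?thesis .
qed



lemma main_bound:
  fixes n d :: nat and p \<epsilon> L \<psi> :: real
  assumes eps: "0 < \<epsilon>" "\<epsilon> < 1"
    and Ldef: "L = real n * ln 2" and Lp: "0 < L" and lnL: "2 \<le> ln L"
    and d2: "2 \<le> d" and dd: "real d ^ 2 \<le> L / (2 * ln L)"
    and psidef: "\<psi> = L ^ 2 * exp (- sqrt L)" and psi: "\<psi> \<le> 1/4"
    and p0: "0 \<le> p" and p1: "p \<le> 1"
    and pd: "p ^ d \<le> fact d * (1 - \<epsilon>) * L / ((2::real) ^ n) ^ (d - 1)"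
  shows "cayley_model_prob (Z2n n) p (\<lambda>S. cayley_diam_le (Z2n n) S d)
          \<le> 2 * exp (4 * \<psi> - \<epsilon> * L) + exp (12 * \<psi>) - 1"
proof -
  define V where "V = Pow {..<n}"
  define N where "N = real (card V)"
  have fV: "finite V" unfolding V_def by simp
  have cV: "card V = 2 ^ n" unfolding V_def by (simp add: card_Pow)
  have N2n: "N = 2 ^ n" unfolding N_def cV by simp
  have NL: "N = exp L"
    unfolding N2n Ldef using exp_of_nat_mult[of n "ln (2::real)"] by simp
  have n1: "1 \<le> n" using Lp Ldef by (cases n) auto
  have N2: "2 \<le> N" unfolding N2n using n1 by (metis power_one_right power_increasing numeral_le_one_iff semiring_norm(69) le_numeral_extra(4) one_le_numeral)
  have L1: "1 \<le> L"
  proof -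
    have "1 \<le> exp (ln L)" using lnL by simp
    then show ?thesis using Lp by simp
  qed
  have d1: "1 \<le> d" using d2 by simp
  have pd': "p ^ d \<le> fact d * L / N ^ (d - 1)"
  proof -
    have "fact d * (1 - \<epsilon>) * L \<le> fact d * L" using eps L1 by (simp add: mult_left_le)
    then have "fact d * (1 - \<epsilon>) * L / N ^ (d - 1) \<le> fact d * L / N ^ (d - 1)"
      using N2 by (intro divide_right_mono) auto
    then show ?thesis using pd N2n by simp
  qed
  define \<theta> where "\<theta> = fact d * L * exp (- L / d)"
  define \<Phi> where "\<Phi> = 2 ^ d * real d * fact d * L ^ 2 * exp (- L / d)"
  have \<Phi>\<theta>: "\<Phi> = 2 ^ d * real d * L * \<theta>" unfolding \<Phi>_def \<theta>_def by (simp add: power2_eq_square)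
  have \<Phi>\<psi>: "\<Phi> \<le> \<psi>" unfolding \<Phi>_def psidef using phi_bound[OF Lp d2 lnL dd] by simp
  have H: "N ^ (i - 1) / fact i * p ^ i \<le> \<theta>" if "1 \<le> i" "i < d" for i
    unfolding \<theta>_def by (rule term_bound[OF NL L1 p0 pd' that])
  have \<theta>0: "0 \<le> \<theta>" unfolding \<theta>_def using L1 by simp
  have p\<theta>: "p \<le> \<theta>" using H[of 1] d2 by simp
  have c2d: "1 \<le> (2::real) ^ d" by simp
  have \<theta>L: "\<theta> * L \<le> \<Phi>"
  proof -
    have "1 * 1 \<le> 2 ^ d * real d" using d1 by (intro mult_mono[OF c2d]) auto
    then have "1 * (\<theta> * L) \<le> (2 ^ d * real d) * (\<theta> * L)" using \<theta>0 L1 by (intro mult_right_mono) auto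
    then show ?thesis unfolding \<Phi>\<theta> by (simp add: ac_simps)
  qed
  have d\<theta>: "real d * \<theta> \<le> \<Phi>"
  proof -
    have "1 * 1 \<le> 2 ^ d * L" using L1 by (intro mult_mono[OF c2d]) auto
    then have "1 * (real d * \<theta>) \<le> (2 ^ d * L) * (real d * \<theta>)" using \<theta>0 by (intro mult_right_mono) auto
    then show ?thesis unfolding \<Phi>\<theta> by (simp add: ac_simps)
  qed
  have D\<theta>: "2 ^ d * L * \<theta> \<le> \<Phi>"
  proof -
    have "1 * (2 ^ d * L * \<theta>) \<le> real d * (2 ^ d * L * \<theta>)" using \<theta>0 L1 d1 by (intro mult_right_mono) auto
    then show ?thesis unfolding \<Phi>\<theta> by (simp add: ac_simps)
  qed
  have pL: "p * L \<le> \<Phi>"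
  proof -
    have "p * L \<le> \<theta> * L" using p\<theta> L1 by (intro mult_right_mono) auto
    then show ?thesis using \<theta>L by linarith
  qed
  have phalf: "p \<le> 1/2"
  proof -
    have "\<theta> \<le> \<theta> * L" using \<theta>0 L1 by (simp add: mult_le_cancel_left1)
    then show ?thesis using p\<theta> \<theta>L \<Phi>\<psi> psi by linarith
  qed
  define P where "P = (\<lambda>g. real (card (Fam V d g)) * p ^ d)"
  define \<rho> where "\<rho> = (\<lambda>g. \<Sum>k\<in>{1..<d}. real (card (Fam V k g)) * p ^ k)"
  have P0: "0 \<le> P g" for g unfolding P_def using p0 by simp
  have Ple: "P g \<le> (1 - \<epsilon>) * L" for g
  proof -
    have "P g \<le> N ^ (d - 1) / fact d * p ^ d"
      unfolding P_def N_def by (rule mult_right_mono[OF card_Fam[OF fV d1]]) (use p0 in simp)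
    also have "\<dots> \<le> N ^ (d - 1) / fact d * (fact d * (1 - \<epsilon>) * L / N ^ (d - 1))"
      by (rule mult_left_mono) (use pd N2n N2 in auto)
    also have "\<dots> = (1 - \<epsilon>) * L" using N2 by simp
    finally show ?thesis .
  qed
  have PL: "P g \<le> L" for g
  proof -
    have "(1 - \<epsilon>) * L \<le> 1 * L" using eps L1 by (intro mult_right_mono) auto
    then show ?thesis using Ple[of g] by simp
  qed
  have \<rho>0: "0 \<le> \<rho> g" for g unfolding \<rho>_def using p0 by (intro sum_nonneg) simp
  have \<rho>le: "\<rho> g \<le> \<Phi>" for g
  proof -
    have "\<rho> g \<le> (\<Sum>k\<in>{1..<d}. \<theta>)" unfolding \<rho>_def
    proof (rule sum_mono)
      fix k assume "k \<in> {1..<d}"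
      then have k: "1 \<le> k" "k < d" by auto
      have "real (card (Fam V k g)) * p ^ k \<le> N ^ (k - 1) / fact k * p ^ k"
        unfolding N_def by (rule mult_right_mono[OF card_Fam[OF fV k(1)]]) (use p0 in simp)
      also have "\<dots> \<le> \<theta>" by (rule H[OF k])
      finally show "real (card (Fam V k g)) * p ^ k \<le> \<theta>" .
    qed
    also have "\<dots> = real (d - 1) * \<theta>" by simp
    also have "\<dots> \<le> real d * \<theta>" using \<theta>0 by (intro mult_right_mono) auto
    finally show ?thesis using d\<theta> by linarith
  qed
  have musplit: "mu p (Rep V d g) = P g + \<rho> g" if "g \<noteq> {}" for g
  proof -
    have "{1..d} = insert d {1..<d}" using d1 by auto
    then show ?thesis unfolding mu_Rep[OF fV that] P_def \<rho>_def by simp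
  qed
  define Q where "Q = (\<lambda>g S. \<forall>A\<in>Rep V d g. \<not> A \<subseteq> S)"
  define a where "a = (\<lambda>g. EE p V (\<lambda>S. of_bool (Q g S)))"
  have a0: "0 \<le> a k" for k unfolding a_def by (rule EE_nonneg[OF p0 p1]) simp
  have alow: "exp (- (1 + 2 * p) * (P g + \<rho> g)) \<le> a g" if "g \<noteq> {}" for g
  proof -
    have "exp (- (1 + 2 * p) * mu p (Rep V d g)) \<le> (\<Prod>A\<in>Rep V d g. 1 - p ^ card A)"
      by (rule prod_lower[OF finite_Rep[OF fV] Rep_nonempty_card[OF fV that] p0 phalf])
    also have "\<dots> \<le> a g" unfolding a_def Q_def
      by (rule harris_prod[OF fV p0 p1 finite_Rep[OF fV]]) (auto simp: Rep_def)
    finally show ?thesis using musplit[OF that] by simp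
  qed
  have alow2: "exp (- (1 - \<epsilon>) * L - 4 * \<Phi>) \<le> a g" if "g \<noteq> {}" for g
  proof -
    have "p * P g \<le> p * L" using PL p0 by (rule mult_left_mono)
    moreover have "(1 + 2 * p) * \<rho> g \<le> 2 * \<rho> g" using phalf \<rho>0 by (intro mult_right_mono) auto
    ultimately have "(1 + 2 * p) * (P g + \<rho> g) \<le> (1 - \<epsilon>) * L + 4 * \<Phi>"
      using Ple[of g] pL \<rho>le[of g] by (simp add: algebra_simps)
    moreover have "- (1 + 2 * p) * (P g + \<rho> g) = - ((1 + 2 * p) * (P g + \<rho> g))" by (simp add: algebra_simps)
    moreover have "- (1 - \<epsilon>) * L = - ((1 - \<epsilon>) * L)" by (simp add: algebra_simps)
    ultimately have "- (1 - \<epsilon>) * L - 4 * \<Phi> \<le> - (1 + 2 * p) * (P g + \<rho> g)" by linarith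
    then have "exp (- (1 - \<epsilon>) * L - 4 * \<Phi>) \<le> exp (- (1 + 2 * p) * (P g + \<rho> g))" by simp
    then show ?thesis using alow[OF that] by linarith
  qed
  define T where "T = V - {{}}"
  have fT: "finite T" unfolding T_def using fV by simp
  have cT: "real (card T) = N - 1"
  proof -
    have "{} \<in> V" unfolding V_def by simp
    then have "card T = card V - 1" unfolding T_def using fV by (simp add: card_Diff_singleton)
    moreover have "1 \<le> card V" using cV by simp
    ultimately show ?thesis unfolding N_def by (simp add: of_nat_diff)
  qed
  define Em where "Em = (\<Sum>g\<in>T. a g)"
  have Emlow: "exp (\<epsilon> * L - 4 * \<Phi>) / 2 \<le> Em"
  proof -
    have "(\<Sum>g\<in>T. exp (- (1 - \<epsilon>) * L - 4 * \<Phi>)) \<le> Em"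
      unfolding Em_def by (rule sum_mono) (rule alow2, simp add: T_def)
    moreover have "(\<Sum>g\<in>T. exp (- (1 - \<epsilon>) * L - 4 * \<Phi>)) = (N - 1) * exp (- (1 - \<epsilon>) * L - 4 * \<Phi>)"
      using cT by simp
    moreover have "N / 2 * exp (- (1 - \<epsilon>) * L - 4 * \<Phi>) \<le> (N - 1) * exp (- (1 - \<epsilon>) * L - 4 * \<Phi>)"
      using N2 by (intro mult_right_mono) auto
    moreover have "N / 2 * exp (- (1 - \<epsilon>) * L - 4 * \<Phi>) = exp (\<epsilon> * L - 4 * \<Phi>) / 2"
      unfolding NL by (simp add: exp_add[symmetric] algebra_simps)
    ultimately show ?thesis by linarith
  qed
  have Emp: "0 < Em"
  proof -
    have "0 < exp (\<epsilon> * L - 4 * \<Phi>) / 2" by simp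
    then show ?thesis using Emlow by linarith
  qed
  have invEm: "1 / Em \<le> 2 * exp (4 * \<psi> - \<epsilon> * L)"
  proof -
    have "1 / Em \<le> 1 / (exp (\<epsilon> * L - 4 * \<Phi>) / 2)" using Emlow Emp by (intro divide_left_mono) auto
    also have "\<dots> = 2 * exp (4 * \<Phi> - \<epsilon> * L)" by (simp add: exp_diff field_simps)
    also have "\<dots> \<le> 2 * exp (4 * \<psi> - \<epsilon> * L)" using \<Phi>\<psi> by simp
    finally show ?thesis .
  qed
  have pair: "EE p V (\<lambda>S. of_bool (Q g S \<and> Q h S)) \<le> exp (12 * \<Phi>) * a g * a h"
    if gh: "g \<in> T" "h \<in> T" "g \<noteq> h" for g h
  proof -
    define F where "F = Fam V d g \<union> Fam V d h"
    have fF: "finite F" unfolding F_def using finite_Fam[OF fV] by simp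
    have FV: "F \<subseteq> Pow V" unfolding F_def Fam_def by auto
    have disj: "Fam V d g \<inter> Fam V d h = {}" using gh(3) unfolding Fam_def by auto
    have e1: "EE p V (\<lambda>S. of_bool (Q g S \<and> Q h S)) \<le> EE p V (\<lambda>S. of_bool (\<forall>A\<in>F. \<not> A \<subseteq> S))"
    proof (rule EE_mono[OF p0 p1])
      fix S assume "S \<subseteq> V"
      have "Q g S \<and> Q h S \<Longrightarrow> (\<forall>A\<in>F. \<not> A \<subseteq> S)" unfolding Q_def F_def Fam_def Rep_def by auto
      then show "of_bool (Q g S \<and> Q h S) \<le> (of_bool (\<forall>A\<in>F. \<not> A \<subseteq> S) :: real)" by auto
    qed
    have e2: "EE p V (\<lambda>S. of_bool (\<forall>A\<in>F. \<not> A \<subseteq> S)) \<le> exp (- mu p F + Delta p F)"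
      by (rule janson[OF fV p0 p1 fF FV])
    have muF: "mu p F = P g + P h"
    proof -
      have "mu p F = mu p (Fam V d g) + mu p (Fam V d h)"
        unfolding mu_def F_def by (rule sum.union_disjoint) (use finite_Fam[OF fV] disj in auto)
      moreover have "mu p (Fam V d k) = P k" for k
        unfolding mu_def P_def by (simp add: Fam_def)
      ultimately show ?thesis by simp
    qed
    have inner: "(\<Sum>B\<in>F - {A}. of_bool (A \<inter> B \<noteq> {}) * p ^ card (A \<union> B)) \<le> 2 * (2 ^ d * p ^ d * \<theta>)"
      if A: "A \<in> F" for A
    proof -
      have AV: "A \<subseteq> V" "card A = d" using A unfolding F_def Fam_def by auto
      have "F - {A} = (Fam V d g - {A}) \<union> (Fam V d h - {A})" unfolding F_def by auto
      then have "(\<Sum>B\<in>F - {A}. of_bool (A \<inter> B \<noteq> {}) * p ^ card (A \<union> B))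
          = (\<Sum>B\<in>Fam V d g - {A}. of_bool (A \<inter> B \<noteq> {}) * p ^ card (A \<union> B))
          + (\<Sum>B\<in>Fam V d h - {A}. of_bool (A \<inter> B \<noteq> {}) * p ^ card (A \<union> B))"
        by (simp only:) (rule sum.union_disjoint, use finite_Fam[OF fV] disj in auto)
      also have "\<dots> \<le> 2 ^ d * p ^ d * \<theta> + 2 ^ d * p ^ d * \<theta>"
        by (intro add_mono overlap_bound[OF fV AV p0 \<theta>0]) (use H N_def in auto)
      finally show ?thesis by (simp add: ac_simps)
    qed
    have DF: "Delta p F \<le> 4 * \<Phi>"
    proof -
      have "Delta p F \<le> (\<Sum>A\<in>F. 2 * (2 ^ d * p ^ d * \<theta>))"
        unfolding Delta_def by (rule sum_mono) (rule inner)
      also have "\<dots> = real (card F) * p ^ d * (2 * 2 ^ d * \<theta>)" by simp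
      also have "real (card F) * p ^ d = P g + P h"
      proof -
        have "card F = card (Fam V d g) + card (Fam V d h)"
          unfolding F_def by (rule card_Un_disjoint) (use finite_Fam[OF fV] disj in auto)
        then show ?thesis unfolding P_def by (simp add: algebra_simps)
      qed
      also have "(P g + P h) * (2 * 2 ^ d * \<theta>) \<le> (2 * L) * (2 * 2 ^ d * \<theta>)"
        using PL[of g] PL[of h] \<theta>0 by (intro mult_right_mono) auto
      also have "\<dots> = 4 * (2 ^ d * L * \<theta>)" by simp
      also have "\<dots> \<le> 4 * \<Phi>" using D\<theta> by simp
      finally show ?thesis .
    qed
    have gne: "g \<noteq> {}" "h \<noteq> {}" using gh unfolding T_def by auto
    have ineq: "- (P g + P h) + 4 * \<Phi> \<le> 12 * \<Phi> + (- (1 + 2 * p) * (P g + \<rho> g)) + (- (1 + 2 * p) * (P h + \<rho> h))"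
    proof -
      have "p * P g \<le> p * L" using PL p0 by (rule mult_left_mono)
      moreover have "p * P h \<le> p * L" using PL p0 by (rule mult_left_mono)
      moreover have "(1 + 2 * p) * \<rho> g \<le> 2 * \<rho> g" using phalf \<rho>0 by (intro mult_right_mono) auto
      moreover have "(1 + 2 * p) * \<rho> h \<le> 2 * \<rho> h" using phalf \<rho>0 by (intro mult_right_mono) auto
      ultimately show ?thesis using pL \<rho>le[of g] \<rho>le[of h] by (simp add: algebra_simps)
    qed
    have "EE p V (\<lambda>S. of_bool (Q g S \<and> Q h S)) \<le> exp (- (P g + P h) + 4 * \<Phi>)"
    proof -
      have "- mu p F + Delta p F \<le> - (P g + P h) + 4 * \<Phi>" using muF DF by simp
      then have "exp (- mu p F + Delta p F) \<le> exp (- (P g + P h) + 4 * \<Phi>)" by simp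
      then show ?thesis using e1 e2 by linarith
    qed
    also have "\<dots> \<le> exp (12 * \<Phi> + (- (1 + 2 * p) * (P g + \<rho> g)) + (- (1 + 2 * p) * (P h + \<rho> h)))"
      using ineq by simp
    also have "\<dots> = exp (12 * \<Phi>) * exp (- (1 + 2 * p) * (P g + \<rho> g)) * exp (- (1 + 2 * p) * (P h + \<rho> h))"
      by (simp add: exp_add)
    also have "\<dots> \<le> exp (12 * \<Phi>) * a g * a h"
      using alow[OF gne(1)] alow[OF gne(2)] a0[of g] a0[of h] by (intro mult_mono) auto
    finally show ?thesis .
  qed
  have sm: "EE p V (\<lambda>S. of_bool (\<forall>g\<in>T. \<not> Q g S)) \<le> 1 / Em + exp (12 * \<Phi>) - 1"
    unfolding Em_def a_def
    by (rule second_moment[OF fV p0 p1 fT _ _ ]) (use pair Emp in \<open>auto simp: a_def Em_def\<close>)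
  have "cayley_model_prob (Z2n n) p (\<lambda>S. cayley_diam_le (Z2n n) S d)
      = EE p V (\<lambda>S. of_bool (cayley_diam_le (Z2n n) S d))" unfolding V_def by (rule prob_eq)
  also have "\<dots> \<le> EE p V (\<lambda>S. of_bool (\<forall>g\<in>T. \<not> Q g S))"
  proof (rule EE_mono[OF p0 p1])
    fix S assume S: "S \<subseteq> V"
    have "cayley_diam_le (Z2n n) S d \<Longrightarrow> \<forall>g\<in>T. \<not> Q g S"
    proof (intro ballI)
      fix g assume dm: "cayley_diam_le (Z2n n) S d" and g: "g \<in> T"
      then obtain A where A: "A \<subseteq> S" "card A \<le> d" "xsum A = g"
        using diam_cover[of S n d g] S unfolding V_def T_def by blast
      then have "A \<in> Rep V d g" using S unfolding Rep_def by auto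
      then show "\<not> Q g S" using A unfolding Q_def by auto
    qed
    then show "of_bool (cayley_diam_le (Z2n n) S d) \<le> (of_bool (\<forall>g\<in>T. \<not> Q g S) :: real)" by auto
  qed
  also have "\<dots> \<le> 1 / Em + exp (12 * \<Phi>) - 1" by (rule sm)
  also have "\<dots> \<le> 2 * exp (4 * \<psi> - \<epsilon> * L) + exp (12 * \<psi>) - 1"
  proof -
    have "exp (12 * \<Phi>) \<le> exp (12 * \<psi>)" using \<Phi>\<psi> by simp
    then show ?thesis using invEm by linarith
  qed
  finally show ?thesis .
qed



lemma lim1: "filterlim (\<lambda>n::nat. ln (real n * ln 2)) at_top sequentially"
  by real_asymp

lemma lim2: "((\<lambda>n::nat. (real n * ln 2) ^ 2 * exp (- sqrt (real n * ln 2))) \<longlongrightarrow> 0) sequentially"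
  by real_asymp

lemma lim3:
  assumes "0 < e"
  shows "((\<lambda>n::nat. 2 * exp (4 * ((real n * ln 2) ^ 2 * exp (- sqrt (real n * ln 2))) - e * (real n * ln 2))
     + exp (12 * ((real n * ln 2) ^ 2 * exp (- sqrt (real n * ln 2)))) - 1) \<longlongrightarrow> 0) sequentially"
  using assms by real_asymp

theorem theorem4:
  fixes \<epsilon> \<gamma> :: real
  assumes "\<epsilon> > 0" and "0 < \<gamma>" and "\<gamma> < 1"
  shows "\<forall>\<delta>>0. \<exists>n0::nat. \<forall>n\<ge>n0. \<forall>(d::nat) (p::real).
           (let N = (2::real) ^ n in
              2 \<le> d \<and> real d \<le> (1 - \<gamma>) * sqrt (ln N / (2 * ln (ln N))) \<and>
              0 \<le> p \<and> p \<le> 1 \<and>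
              p \<le> root d (fact d * (1 - \<epsilon>) * ln N / N ^ (d - 1)))
           \<longrightarrow> cayley_model_prob (Z2n n) p (\<lambda>S. cayley_diam_le (Z2n n) S d) < \<delta>"
proof (intro allI impI)
  fix \<delta> :: real assume \<delta>: "0 < \<delta>"
  define e where "e = min \<epsilon> (1/2)"
  have e: "0 < e" "e < 1" "e \<le> \<epsilon>" unfolding e_def using assms by auto
  define Lf where "Lf = (\<lambda>n::nat. real n * ln 2)"
  define \<psi>f where "\<psi>f = (\<lambda>n::nat. (real n * ln 2) ^ 2 * exp (- sqrt (real n * ln 2)))"
  have ev1: "eventually (\<lambda>n. 2 \<le> ln (real n * ln 2)) sequentially"
    using lim1 by (simp add: filterlim_at_top)
  have ev2: "eventually (\<lambda>n. \<psi>f n < 1/4) sequentially"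
    unfolding \<psi>f_def by (rule order_tendstoD(2)[OF lim2]) simp
  have ev3: "eventually (\<lambda>n. 2 * exp (4 * \<psi>f n - e * Lf n) + exp (12 * \<psi>f n) - 1 < \<delta>) sequentially"
    unfolding \<psi>f_def Lf_def by (rule order_tendstoD(2)[OF lim3[OF e(1)] \<delta>])
  have ev4: "eventually (\<lambda>n. 1 \<le> n) sequentially" by (rule eventually_ge_at_top)
  have "eventually (\<lambda>n. 2 \<le> ln (real n * ln 2) \<and> \<psi>f n < 1/4 \<and>
      2 * exp (4 * \<psi>f n - e * Lf n) + exp (12 * \<psi>f n) - 1 < \<delta> \<and> 1 \<le> n) sequentially"
    using ev1 ev2 ev3 ev4 by eventually_elim auto
  then obtain n0 where n0: "\<And>n. n0 \<le> n \<Longrightarrow> 2 \<le> ln (real n * ln 2) \<and> \<psi>f n < 1/4 \<and>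
      2 * exp (4 * \<psi>f n - e * Lf n) + exp (12 * \<psi>f n) - 1 < \<delta> \<and> 1 \<le> n"
    unfolding eventually_sequentially by blast
  show "\<exists>n0::nat. \<forall>n\<ge>n0. \<forall>(d::nat) (p::real).
           (let N = (2::real) ^ n in
              2 \<le> d \<and> real d \<le> (1 - \<gamma>) * sqrt (ln N / (2 * ln (ln N))) \<and>
              0 \<le> p \<and> p \<le> 1 \<and>
              p \<le> root d (fact d * (1 - \<epsilon>) * ln N / N ^ (d - 1)))
           \<longrightarrow> cayley_model_prob (Z2n n) p (\<lambda>S. cayley_diam_le (Z2n n) S d) < \<delta>"
  proof (intro exI[of _ n0] allI impI)
    fix n d :: nat and p :: real
    assume nn: "n0 \<le> n"
    assume H: "let N = (2::real) ^ n in
              2 \<le> d \<and> real d \<le> (1 - \<gamma>) * sqrt (ln N / (2 * ln (ln N))) \<and>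
              0 \<le> p \<and> p \<le> 1 \<and>
              p \<le> root d (fact d * (1 - \<epsilon>) * ln N / N ^ (d - 1))"
    define L where "L = real n * ln 2"
    have lnN: "ln ((2::real) ^ n) = L" unfolding L_def by (simp add: ln_realpow)
    have H': "2 \<le> d" "real d \<le> (1 - \<gamma>) * sqrt (L / (2 * ln L))" "0 \<le> p" "p \<le> 1"
       "p \<le> root d (fact d * (1 - \<epsilon>) * L / ((2::real) ^ n) ^ (d - 1))"
      using H unfolding Let_def lnN by auto
    have nprops: "2 \<le> ln L" "\<psi>f n < 1/4" "2 * exp (4 * \<psi>f n - e * L) + exp (12 * \<psi>f n) - 1 < \<delta>" "1 \<le> n"
      using n0[OF nn] unfolding L_def Lf_def by auto
    have Lp: "0 < L" unfolding L_def using nprops(4) by simp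
    have lnLp: "0 < 2 * ln L" using nprops(1) by simp
    have dd: "real d ^ 2 \<le> L / (2 * ln L)"
    proof -
      have X0: "0 \<le> L / (2 * ln L)" using Lp lnLp by simp
      have "real d ^ 2 \<le> ((1 - \<gamma>) * sqrt (L / (2 * ln L))) ^ 2"
        using H'(2) by (intro power_mono) auto
      also have "\<dots> = (1 - \<gamma>) ^ 2 * (L / (2 * ln L))" using X0 by (simp add: power_mult_distrib)
      also have "\<dots> \<le> 1 * (L / (2 * ln L))"
        using assms X0 by (intro mult_right_mono) (auto simp: power_le_one)
      finally show ?thesis by simp
    qed
    have pd: "p ^ d \<le> fact d * (1 - e) * L / ((2::real) ^ n) ^ (d - 1)"
    proof -
      define x where "x = fact d * (1 - \<epsilon>) * L / ((2::real) ^ n) ^ (d - 1)"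
      have dpos: "0 < d" using H'(1) by simp
      have x0: "0 \<le> x"
      proof (rule ccontr)
        assume "\<not> 0 \<le> x"
        then have "root d x < 0" using dpos by simp
        then show False using H'(3,5) unfolding x_def by simp
      qed
      have "p ^ d \<le> root d x ^ d" using H'(3,5) unfolding x_def by (intro power_mono) auto
      also have "\<dots> = x" using dpos x0 by simp
      also have "x \<le> fact d * (1 - e) * L / ((2::real) ^ n) ^ (d - 1)"
        unfolding x_def using e Lp by (intro divide_right_mono mult_right_mono mult_left_mono) auto
      finally show ?thesis .
    qed
    have "cayley_model_prob (Z2n n) p (\<lambda>S. cayley_diam_le (Z2n n) S d)
        \<le> 2 * exp (4 * \<psi>f n - e * L) + exp (12 * \<psi>f n) - 1"
      by (rule main_bound[OF e(1,2) L_def Lp nprops(1) H'(1) dd _ _ H'(3,4) pd])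
         (use nprops(2) in \<open>auto simp: \<psi>f_def L_def\<close>)
    then show "cayley_model_prob (Z2n n) p (\<lambda>S. cayley_diam_le (Z2n n) S d) < \<delta>"
      using nprops(3) by linarith
  qed
qed

end
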